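(* Let $\mathcal C$ be a hereditary class of graphs with infinite VC-dimension and let $H=(A\cup B,E)$ be a bipartite graph with bipartition $(A,B)$. Then $\mathcal C$ contains a graph $G$ whose vertex set admits a partition $(A',B')$ such that deleting from $G$ all edges with both ends in $A'$ and all edges with both ends in $B'$ yields a graph isomorphic to $H$ via an isomorphism mapping $A'$ onto $A$ and $B'$ onto $B$ (i.e. $H$ is a bipartisation of $G$).
   Context: A class of graphs is hereditary if it is closed under isomorphism and under taking induced subgraphs. For a graph $G$ and $v\in V(G)$, $N[v]$ is the closed neighbourhood. A set $X\subseteq V(G)$ is shattered if for every $S\subseteq X$ there is a vertex $v$ with $N[v]\cap X=S$; the VC-dimension of $G$ is the largest size of a shattered set; a class has infinite VC-dimension if these are unbounded over the class. A bipartite graph $H=(A\cup B,E)$ is a bipartisation of $G$ if for some partition $(A,B)$ of $V(G)$, removing all edges inside $A$ and inside $B$ from $G$ yields $H$. *)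

theory Defs
  imports Main
begin

text \<open>A (finite simple) graph is a pair (V, E) of a finite vertex set and a
symmetric irreflexive edge relation on V (each edge stored in both directions).\<close>

type_synonym 'a graph = "'a set \<times> ('a \<times> 'a) set"

definition verts :: "'a graph \<Rightarrow> 'a set" where "verts G = fst G"
definition edges :: "'a graph \<Rightarrow> ('a \<times> 'a) set" where "edges G = snd G"

definition is_graph :: "'a graph \<Rightarrow> bool" where
  "is_graph G \<longleftrightarrow> finite (verts G) \<and> edges G \<subseteq> verts G \<times> verts G
     \<and> (\<forall>u v. (u, v) \<in> edges G \<longrightarrow> (v, u) \<in> edges G)
     \<and> (\<forall>v. (v, v) \<notin> edges G)"

definition graph_iso :: "('a \<Rightarrow> 'b) \<Rightarrow> 'a graph \<Rightarrow> 'b graph \<Rightarrow> bool" where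
  "graph_iso f G H \<longleftrightarrow> bij_betw f (verts G) (verts H)
     \<and> (\<forall>u\<in>verts G. \<forall>v\<in>verts G. (u, v) \<in> edges G \<longleftrightarrow> (f u, f v) \<in> edges H)"

definition induced_subgraph :: "'a graph \<Rightarrow> 'a set \<Rightarrow> 'a graph" where
  "induced_subgraph G X = (X, edges G \<inter> (X \<times> X))"

definition hereditary :: "nat graph set \<Rightarrow> bool" where
  "hereditary C \<longleftrightarrow>
     (\<forall>G\<in>C. \<forall>G'. \<forall>f. is_graph G' \<and> graph_iso f G G' \<longrightarrow> G' \<in> C)
   \<and> (\<forall>G\<in>C. \<forall>X. X \<subseteq> verts G \<longrightarrow> induced_subgraph G X \<in> C)"

definition closed_nbhd :: "'a graph \<Rightarrow> 'a \<Rightarrow> 'a set" where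
  "closed_nbhd G v = insert v {u. (v, u) \<in> edges G}"

definition shattered :: "'a graph \<Rightarrow> 'a set \<Rightarrow> bool" where
  "shattered G X \<longleftrightarrow> X \<subseteq> verts G \<and>
     (\<forall>S\<subseteq>X. \<exists>v\<in>verts G. closed_nbhd G v \<inter> X = S)"

definition infinite_VC_dim :: "'a graph set \<Rightarrow> bool" where
  "infinite_VC_dim C \<longleftrightarrow> (\<forall>k::nat. \<exists>G\<in>C. \<exists>X. shattered G X \<and> finite X \<and> card X \<ge> k)"

definition bipartite_with :: "'a graph \<Rightarrow> 'a set \<Rightarrow> 'a set \<Rightarrow> bool" where
  "bipartite_with H A B \<longleftrightarrow> is_graph H \<and> A \<union> B = verts H \<and> A \<inter> B = {}
     \<and> (\<forall>u v. (u, v) \<in> edges H \<longrightarrow> (u \<in> A \<and> v \<in> B) \<or> (u \<in> B \<and> v \<in> A))"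

definition bipartisation :: "'a graph \<Rightarrow> 'a set \<Rightarrow> 'a set \<Rightarrow> 'a graph" where
  "bipartisation G A' B' = (verts G,
     {(u, v) \<in> edges G. (u \<in> A' \<and> v \<in> B') \<or> (u \<in> B' \<and> v \<in> A')})"

end

theory Submission
  imports Defs
begin

lemma Inr_in_Plus[simp]: "Inr b \<in> A <+> B \<longleftrightarrow> b \<in> B" by (auto simp: Plus_def)
lemma Inl_in_Plus[simp]: "Inl b \<in> A <+> B \<longleftrightarrow> b \<in> A" by (auto simp: Plus_def)

theorem mainTheorem5:
  fixes C :: "nat graph set" and H :: "'b graph" and A B :: "'b set"
  assumes "\<forall>G\<in>C. is_graph G"
    and "hereditary C"
    and "infinite_VC_dim C"
    and "bipartite_with H A B"
  shows "\<exists>G\<in>C. \<exists>A' B'. A' \<union> B' = verts G \<and> A' \<inter> B' = {} \<and>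
           (\<exists>f. graph_iso f (bipartisation G A' B') H \<and> f ` A' = A \<and> f ` B' = B)"
proof -
  have Hg: "is_graph H" and AB: "A \<union> B = verts H" and disj: "A \<inter> B = {}"
    and Hbip: "\<forall>u v. (u, v) \<in> edges H \<longrightarrow> (u \<in> A \<and> v \<in> B) \<or> (u \<in> B \<and> v \<in> A)"
    using assms(4) unfolding bipartite_with_def by auto
  have finA: "finite A" and finB: "finite B" using Hg AB unfolding is_graph_def
    by (metis finite_Un)+
  have Hsym: "\<And>u v. (u, v) \<in> edges H \<Longrightarrow> (v, u) \<in> edges H"
    using Hg unfolding is_graph_def by blast
  define m where "m = card B"
  define D where "D = ({..m} \<times> A) <+> B"
  have finD: "finite D" unfolding D_def using finA finB by simp
  obtain G X where GC: "G \<in> C" and sh: "shattered G X" and finX: "finite X"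
    and cX: "card X \<ge> card D"
    using assms(3) unfolding infinite_VC_dim_def by blast
  have Gg: "is_graph G" using assms(1) GC by blast
  have Gsym: "\<And>u v. (u, v) \<in> edges G \<Longrightarrow> (v, u) \<in> edges G"
    using Gg unfolding is_graph_def by blast
  have XV: "X \<subseteq> verts G" using sh unfolding shattered_def by blast
  obtain \<phi> where \<phi>X: "\<phi> ` D \<subseteq> X" and \<phi>inj: "inj_on \<phi> D"
    using card_le_inj[OF finD finX cX] by blast
  define N where "N b = {a\<in>A. (a, b) \<in> edges H}" for b
  define T where "T b = ({..m} \<times> N b) <+> {b}" for b
  have TD: "b \<in> B \<Longrightarrow> T b \<subseteq> D" for b
    unfolding T_def D_def N_def Plus_def by auto
  have "\<forall>b\<in>B. \<exists>w. w \<in> verts G \<and> closed_nbhd G w \<inter> X = \<phi> ` T b"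
  proof
    fix b assume "b \<in> B"
    then have "\<phi> ` T b \<subseteq> X" using TD \<phi>X by blast
    then show "\<exists>w. w \<in> verts G \<and> closed_nbhd G w \<inter> X = \<phi> ` T b"
      using sh unfolding shattered_def by blast
  qed
  then obtain v where vv: "\<forall>b\<in>B. v b \<in> verts G \<and> closed_nbhd G (v b) \<inter> X = \<phi> ` T b"
    by (rule bchoice[THEN exE])
  have v: "\<And>b. b \<in> B \<Longrightarrow> v b \<in> verts G \<and> closed_nbhd G (v b) \<inter> X = \<phi> ` T b"
    using vv by blast
  have mem: "\<phi> d \<in> closed_nbhd G (v b) \<longleftrightarrow> d \<in> T b" if "b \<in> B" "d \<in> D" for b d
  proof -
    have "\<phi> d \<in> X" using \<phi>X that by blast
    then have "\<phi> d \<in> closed_nbhd G (v b) \<longleftrightarrow> \<phi> d \<in> \<phi> ` T b" using v[OF that(1)] by blast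
    also have "\<dots> \<longleftrightarrow> d \<in> T b" using inj_on_image_mem_iff[OF \<phi>inj that(2) TD[OF that(1)]] .
    finally show ?thesis .
  qed
  define J where "J = {i\<in>{..m}. \<exists>b\<in>B. \<exists>a\<in>A. v b = \<phi> (Inl (i, a))}"
  have "J \<subseteq> (\<lambda>b. fst (projl (inv_into D \<phi> (v b)))) ` B"
  proof
    fix i assume "i \<in> J"
    then obtain b a where b: "b \<in> B" "a \<in> A" "i \<le> m" "v b = \<phi> (Inl (i, a))"
      unfolding J_def by auto
    have "Inl (i, a) \<in> D" unfolding D_def using b by simp
    then have "inv_into D \<phi> (v b) = Inl (i, a)" using b(4) inv_into_f_f[OF \<phi>inj] by simp
    then show "i \<in> (\<lambda>b. fst (projl (inv_into D \<phi> (v b)))) ` B" using b(1) by force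
  qed
  then have "card J \<le> m" unfolding m_def
    by (meson card_image_le card_mono finB finite_imageI order_trans)
  then have "\<not> {..m} \<subseteq> J"
  proof (intro notI)
    assume "{..m} \<subseteq> J"
    moreover have "finite J" unfolding J_def by simp
    ultimately have "card {..m} \<le> card J" by (rule card_mono[rotated])
    then show False using \<open>card J \<le> m\<close> by simp
  qed
  then obtain i0 where i0: "i0 \<le> m" "i0 \<notin> J" by auto
  define hA where "hA a = \<phi> (Inl (i0, a))" for a
  define A' where "A' = hA ` A"
  define B' where "B' = v ` B"
  have inD: "a \<in> A \<Longrightarrow> Inl (i0, a) \<in> D" for a unfolding D_def using i0 by simp
  have inDr: "b \<in> B \<Longrightarrow> Inr b \<in> D" for b unfolding D_def by simp
  have hAinj: "inj_on hA A"
    unfolding inj_on_def hA_def using \<phi>inj inD unfolding inj_on_def by blast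
  have vinj: "inj_on v B"
  proof (rule inj_onI)
    fix b b' assume bb: "b \<in> B" "b' \<in> B" "v b = v b'"
    have "Inr b \<in> T b" unfolding T_def by simp
    then have "\<phi> (Inr b) \<in> closed_nbhd G (v b')" using mem[OF bb(1) inDr[OF bb(1)]] bb(3) by simp
    then have "Inr b \<in> T b'" using mem[OF bb(2) inDr[OF bb(1)]] by simp
    then show "b = b'" unfolding T_def by simp
  qed
  have ABdisj: "A' \<inter> B' = {}"
  proof (rule ccontr)
    assume "A' \<inter> B' \<noteq> {}"
    then obtain w where w: "w \<in> hA ` A" "w \<in> v ` B" unfolding A'_def B'_def by blast
    from w(1) obtain a where a: "a \<in> A" "w = hA a" by blast
    from w(2) obtain b where b: "b \<in> B" "w = v b" by blast
    from a b have "a \<in> A" "b \<in> B" "v b = hA a" by simp_all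
    then have "i0 \<in> J" unfolding J_def hA_def using i0 by auto
    then show False using i0 by simp
  qed
  have A'V: "A' \<subseteq> verts G" unfolding A'_def hA_def using inD \<phi>X XV by blast
  have B'V: "B' \<subseteq> verts G" unfolding B'_def using v by blast
  define G' where "G' = induced_subgraph G (A' \<union> B')"
  have G'C: "G' \<in> C" using assms(2) GC A'V B'V unfolding hereditary_def G'_def by blast
  have vG': "verts G' = A' \<union> B'" unfolding G'_def induced_subgraph_def verts_def by simp
  have eG': "edges G' = edges G \<inter> ((A' \<union> B') \<times> (A' \<union> B'))"
    unfolding G'_def induced_subgraph_def edges_def by simp
  have key1: "(v y, hA x) \<in> edges G \<longleftrightarrow> (x, y) \<in> edges H" if "x \<in> A" "y \<in> B" for x y
  proof -
    have ne: "hA x \<noteq> v y" using ABdisj that unfolding A'_def B'_def by blast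
    have "(v y, hA x) \<in> edges G \<longleftrightarrow> hA x \<in> closed_nbhd G (v y)"
      unfolding closed_nbhd_def using ne by auto
    also have "\<dots> \<longleftrightarrow> Inl (i0, x) \<in> T y" unfolding hA_def using mem[OF that(2) inD[OF that(1)]] .
    also have "\<dots> \<longleftrightarrow> (x, y) \<in> edges H" unfolding T_def N_def using i0 that by auto
    finally show ?thesis .
  qed
  have key2: "(hA x, v y) \<in> edges G \<longleftrightarrow> (x, y) \<in> edges H" if "x \<in> A" "y \<in> B" for x y
    using key1[OF that] Gsym by blast
  have key3: "(v y, hA x) \<in> edges G \<longleftrightarrow> (y, x) \<in> edges H" if "x \<in> A" "y \<in> B" for x y
    using key1[OF that] Hsym by blast
  define h where "h x = (if x \<in> A then hA x else v x)" for x
  have hinj: "inj_on h (A \<union> B)"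
  proof (rule inj_onI)
    fix x y assume xy: "x \<in> A \<union> B" "y \<in> A \<union> B" "h x = h y"
    show "x = y"
    proof (cases "x \<in> A"; cases "y \<in> A")
      assume "x \<in> A" "y \<in> A" then show ?thesis using xy hAinj unfolding h_def inj_on_def by auto
    next
      assume "x \<in> A" "y \<notin> A" then have False using xy ABdisj unfolding h_def A'_def B'_def by auto
      then show ?thesis ..
    next
      assume "x \<notin> A" "y \<in> A" then have False using xy ABdisj unfolding h_def A'_def B'_def by auto
      then show ?thesis ..
    next
      assume "x \<notin> A" "y \<notin> A" then show ?thesis using xy vinj unfolding h_def inj_on_def by auto
    qed
  qed
  have himg: "h ` (A \<union> B) = A' \<union> B'"
    unfolding h_def A'_def B'_def using disj by (auto simp: image_iff)
  have hA': "h ` A = A'" unfolding h_def A'_def by simp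
  have hB': "h ` B = B'" unfolding h_def B'_def using disj by (auto simp: image_iff)
  have hbij: "bij_betw h (A \<union> B) (A' \<union> B')" using hinj himg unfolding bij_betw_def by simp
  define f where "f = inv_into (A \<union> B) h"
  have fbij: "bij_betw f (A' \<union> B') (A \<union> B)" unfolding f_def using bij_betw_inv_into[OF hbij] .
  have fh: "x \<in> A \<union> B \<Longrightarrow> f (h x) = x" for x unfolding f_def using inv_into_f_f[OF hinj] by simp
  let ?G = "bipartisation G' A' B'"
  have vbip: "verts ?G = A' \<union> B'" using vG' unfolding bipartisation_def verts_def by simp
  have ebip: "edges ?G = {(u, w) \<in> edges G'. (u \<in> A' \<and> w \<in> B') \<or> (u \<in> B' \<and> w \<in> A')}"
    unfolding bipartisation_def edges_def by simp
  have edge_h: "(h x, h y) \<in> edges ?G \<longleftrightarrow> (x, y) \<in> edges H" if "x \<in> A \<union> B" "y \<in> A \<union> B" for x y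
  proof -
    have hx: "h x \<in> A' \<union> B'" "h y \<in> A' \<union> B'" using that himg by auto
    have "(h x, h y) \<in> edges ?G \<longleftrightarrow> (h x, h y) \<in> edges G \<and> ((h x \<in> A' \<and> h y \<in> B') \<or> (h x \<in> B' \<and> h y \<in> A'))"
      using ebip eG' hx by auto
    also have "\<dots> \<longleftrightarrow> (x, y) \<in> edges H"
    proof (cases "x \<in> A"; cases "y \<in> A")
      assume a: "x \<in> A" "y \<in> A"
      then have "h x \<in> A'" "h y \<in> A'" using hA' by auto
      then show ?thesis using a Hbip disj ABdisj by blast
    next
      assume a: "x \<in> A" "y \<notin> A"
      then have "y \<in> B" using that by blast
      then show ?thesis using a key2 hA' hB' unfolding h_def by auto
    next
      assume a: "x \<notin> A" "y \<in> A"
      then have "x \<in> B" using that by blast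
      then show ?thesis using a key3 hA' hB' unfolding h_def by auto
    next
      assume a: "x \<notin> A" "y \<notin> A"
      then have b: "x \<in> B" "y \<in> B" using that by blast+
      then have "h x \<in> B'" "h y \<in> B'" using hB' by auto
      then show ?thesis using a b Hbip disj ABdisj by blast
    qed
    finally show ?thesis .
  qed
  have iso: "graph_iso f ?G H"
    unfolding graph_iso_def
  proof (intro conjI ballI)
    show "bij_betw f (verts ?G) (verts H)" using fbij vbip AB by simp
  next
    fix u w assume uw: "u \<in> verts ?G" "w \<in> verts ?G"
    then obtain x y where xy: "x \<in> A \<union> B" "y \<in> A \<union> B" "u = h x" "w = h y"
      using vbip himg by (metis imageE)
    show "(u, w) \<in> edges ?G \<longleftrightarrow> (f u, f w) \<in> edges H"
      using edge_h[OF xy(1,2)] fh xy by simp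
  qed
  have fA: "f ` A' = A" using fh hA' by force
  have fB: "f ` B' = B" using fh hB' by force
  show ?thesis
    using G'C vG' ABdisj iso fA fB by blast
qed

end
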